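(* Let $P$ be a finite nonempty poset. Then: (i) there exists a labeling $\epsilon:E(P)\to\{-1,1\}$ (induced by a bijection $\omega:P\to\{1,\dots,p\}$) such that $P$ is $\epsilon$-consistent if and only if $P$ is parity consistent; (ii) there exists a labeling $\epsilon:E(P)\to\{-1,1\}$ (induced by a bijection $\omega:P\to\{1,\dots,p\}$) such that $P$ is $\epsilon$-graded if and only if $P$ is parity graded. Moreover, the labeling $\epsilon$ can be chosen so that the corresponding rank function has values in $\{0,1\}$.
   Context: Let $p=|P|$. Write $x\prec y$ if $y$ covers $x$ and $E(P)=\{(x,y):x\prec y\}$. A bijection $\omega:P\to\{1,\dots,p\}$ induces $\epsilon:E(P)\to\{-1,1\}$ with $\epsilon(x,y)=1$ if $\omega(x)<\omega(y)$ and $-1$ otherwise. $P$ is $\epsilon$-graded if $\sum_{i=1}^n\epsilon(x_{i-1},x_i)$ is the same for every maximal chain $x_0\prec\cdots\prec x_n$ of $P$. $P$ is $\epsilon$-consistent if for every $y\in P$ the principal order ideal $\Lambda_y=\{x\in P:x\le y\}$ is $\epsilon_y$-graded, where $\epsilon_y$ is the restriction of $\epsilon$ to $E(\Lambda_y)$; the rank function is then $\rho(y)=$ the common value of these sums for $\Lambda_y$ (i.e. the $\epsilon$-weight of any saturated chain from a minimal element to $y$). A poset is parity graded if all maximal chains have sizes of the same parity, and parity consistent if every principal order ideal $\Lambda_x$ is parity graded. *)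

theory Defs
  imports Main
begin

definition poset_on :: "'a set \<Rightarrow> ('a \<Rightarrow> 'a \<Rightarrow> bool) \<Rightarrow> bool" where
  "poset_on P leq \<longleftrightarrow>
     (\<forall>x\<in>P. leq x x) \<and>
     (\<forall>x\<in>P. \<forall>y\<in>P. leq x y \<and> leq y x \<longrightarrow> x = y) \<and>
     (\<forall>x\<in>P. \<forall>y\<in>P. \<forall>z\<in>P. leq x y \<and> leq y z \<longrightarrow> leq x z)"

definition pless :: "('a \<Rightarrow> 'a \<Rightarrow> bool) \<Rightarrow> 'a \<Rightarrow> 'a \<Rightarrow> bool" where
  "pless leq x y \<longleftrightarrow> leq x y \<and> x \<noteq> y"

definition covers :: "'a set \<Rightarrow> ('a \<Rightarrow> 'a \<Rightarrow> bool) \<Rightarrow> 'a \<Rightarrow> 'a \<Rightarrow> bool" where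
  "covers S leq x y \<longleftrightarrow> x \<in> S \<and> y \<in> S \<and> pless leq x y \<and>
     \<not> (\<exists>z\<in>S. pless leq x z \<and> pless leq z y)"

definition maximal_chain :: "'a set \<Rightarrow> ('a \<Rightarrow> 'a \<Rightarrow> bool) \<Rightarrow> 'a list \<Rightarrow> bool" where
  "maximal_chain S leq c \<longleftrightarrow> c \<noteq> [] \<and> set c \<subseteq> S \<and>
     (\<forall>i. Suc i < length c \<longrightarrow> covers S leq (c ! i) (c ! Suc i)) \<and>
     \<not> (\<exists>z\<in>S. pless leq z (hd c)) \<and>
     \<not> (\<exists>z\<in>S. pless leq (last c) z)"

definition eps :: "('a \<Rightarrow> nat) \<Rightarrow> 'a \<Rightarrow> 'a \<Rightarrow> int" where
  "eps \<omega> x y = (if \<omega> x < \<omega> y then 1 else -1)"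

definition chain_weight :: "('a \<Rightarrow> nat) \<Rightarrow> 'a list \<Rightarrow> int" where
  "chain_weight \<omega> c = (\<Sum>i<length c - 1. eps \<omega> (c ! i) (c ! Suc i))"

definition eps_graded :: "'a set \<Rightarrow> ('a \<Rightarrow> 'a \<Rightarrow> bool) \<Rightarrow> ('a \<Rightarrow> nat) \<Rightarrow> bool" where
  "eps_graded S leq \<omega> \<longleftrightarrow>
     (\<forall>c d. maximal_chain S leq c \<and> maximal_chain S leq d \<longrightarrow>
        chain_weight \<omega> c = chain_weight \<omega> d)"

definition down_set :: "'a set \<Rightarrow> ('a \<Rightarrow> 'a \<Rightarrow> bool) \<Rightarrow> 'a \<Rightarrow> 'a set" where
  "down_set P leq y = {x\<in>P. leq x y}"

definition eps_consistent :: "'a set \<Rightarrow> ('a \<Rightarrow> 'a \<Rightarrow> bool) \<Rightarrow> ('a \<Rightarrow> nat) \<Rightarrow> bool" where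
  "eps_consistent P leq \<omega> \<longleftrightarrow> (\<forall>y\<in>P. eps_graded (down_set P leq y) leq \<omega>)"

text \<open>Rank function: \<rho>(y) is the \<epsilon>-weight of any maximal chain of \<Lambda>_y
  (i.e. any saturated chain from a minimal element to y); well defined under consistency.\<close>
definition rank :: "'a set \<Rightarrow> ('a \<Rightarrow> 'a \<Rightarrow> bool) \<Rightarrow> ('a \<Rightarrow> nat) \<Rightarrow> 'a \<Rightarrow> int" where
  "rank P leq \<omega> y = chain_weight \<omega> (SOME c. maximal_chain (down_set P leq y) leq c)"

definition parity_graded :: "'a set \<Rightarrow> ('a \<Rightarrow> 'a \<Rightarrow> bool) \<Rightarrow> bool" where
  "parity_graded S leq \<longleftrightarrow>
     (\<forall>c d. maximal_chain S leq c \<and> maximal_chain S leq d \<longrightarrow>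
        even (length c) = even (length d))"

definition parity_consistent :: "'a set \<Rightarrow> ('a \<Rightarrow> 'a \<Rightarrow> bool) \<Rightarrow> bool" where
  "parity_consistent P leq \<longleftrightarrow> (\<forall>x\<in>P. parity_graded (down_set P leq x) leq)"

end

theory Submission
  imports Defs
begin

fun cc :: "('a \<Rightarrow> 'a \<Rightarrow> bool) \<Rightarrow> 'a list \<Rightarrow> bool" where
  "cc R (x # y # xs) = (R x y \<and> cc R (y # xs))"
| "cc R _ = True"

fun wt :: "('a \<Rightarrow> nat) \<Rightarrow> 'a list \<Rightarrow> int" where
  "wt w (x # y # xs) = eps w x y + wt w (y # xs)"
| "wt w _ = 0"

lemma cc_nth: "cc R c \<longleftrightarrow> (\<forall>i. Suc i < length c \<longrightarrow> R (c!i) (c!Suc i))"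
proof (induction R c rule: cc.induct)
  case (1 R x y xs)
  have "(\<forall>i. Suc i < length (x#y#xs) \<longrightarrow> R ((x#y#xs)!i) ((x#y#xs)!Suc i)) \<longleftrightarrow>
        R x y \<and> (\<forall>i. Suc i < length (y#xs) \<longrightarrow> R ((y#xs)!i) ((y#xs)!Suc i))"
    (is "?L \<longleftrightarrow> ?R")
  proof
    assume L: ?L
    show ?R
    proof
      show "R x y" using L[rule_format, of 0] by simp
      show "\<forall>i. Suc i < length (y#xs) \<longrightarrow> R ((y#xs)!i) ((y#xs)!Suc i)"
        using L by (metis Suc_less_eq length_Cons nth_Cons_Suc)
    qed
  next
    assume R: ?R
    show ?L
    proof (intro allI impI)
      fix i assume "Suc i < length (x#y#xs)"
      then show "R ((x#y#xs)!i) ((x#y#xs)!Suc i)" using R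
        by (cases i) auto
    qed
  qed
  then show ?case using 1 by simp
qed auto

lemma chain_weight_wt: "chain_weight w c = wt w c"
proof (induction w c rule: wt.induct)
  case (1 w x y xs)
  have "chain_weight w (x#y#xs) = (\<Sum>i<Suc (length xs). eps w ((x#y#xs) ! i) ((x#y#xs) ! Suc i))"
    by (simp add: chain_weight_def)
  also have "\<dots> = eps w x y + (\<Sum>i<length xs. eps w ((y#xs) ! i) ((y#xs) ! Suc i))"
    by (subst sum.lessThan_Suc_shift) simp
  also have "\<dots> = eps w x y + chain_weight w (y#xs)" by (simp add: chain_weight_def)
  finally show ?case using 1 by simp
qed (auto simp: chain_weight_def)

lemma wt_parity: "c \<noteq> [] \<Longrightarrow> odd (wt w c + int (length c))"
proof (induction w c rule: wt.induct)
  case (1 w x y xs)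
  have "odd (wt w (y#xs) + int (length (y#xs)))" using 1 by simp
  moreover have "odd (eps w x y)" by (simp add: eps_def)
  ultimately show ?case by simp
qed auto

lemma cc_append: "cc R (xs @ [y]) \<Longrightarrow> cc R (y # ys) \<Longrightarrow> cc R (xs @ y # ys)"
proof (induction xs)
  case (Cons a xs) then show ?case by (cases xs) auto
qed auto

lemma cc_snoc: "c \<noteq> [] \<Longrightarrow> cc R c \<Longrightarrow> R (last c) y \<Longrightarrow> cc R (c @ [y])"
proof (induction c)
  case (Cons a c) then show ?case by (cases c) auto
qed auto

lemma cc_mono: "cc R c \<Longrightarrow> (\<And>x y. x \<in> set c \<Longrightarrow> y \<in> set c \<Longrightarrow> R x y \<Longrightarrow> R' x y) \<Longrightarrow> cc R' c"
  by (induction R c rule: cc.induct) auto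

lemma join_chain:
  assumes "c \<noteq> []" "u \<noteq> []" "last c = hd u" "cc R c" "cc R u"
  shows "hd (butlast c @ u) = hd c" "last (butlast c @ u) = last u"
    "length (butlast c @ u) = length c + length u - 1"
    "set (butlast c @ u) \<subseteq> set c \<union> set u" "cc R (butlast c @ u)"
proof -
  obtain c0 where c0: "c = c0 @ [last c]" using assms(1) by (metis append_butlast_last_id)
  obtain u0 where u0: "u = hd u # u0" using assms(2) by (metis list.exhaust_sel)
  have bc: "butlast c = c0" by (subst c0) simp
  show "hd (butlast c @ u) = hd c" using assms bc c0 by (cases c0) auto
  show "last (butlast c @ u) = last u" using assms by simp
  show "length (butlast c @ u) = length c + length u - 1" using assms by (cases c) auto
  show "set (butlast c @ u) \<subseteq> set c \<union> set u" by (auto dest: in_set_butlastD)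
  show "cc R (butlast c @ u)" using cc_append[of R c0 "hd u" u0] assms bc c0 u0 by metis
qed

context
  fixes P :: "'a set" and leq :: "'a \<Rightarrow> 'a \<Rightarrow> bool"
  assumes fin: "finite P" and po: "poset_on P leq"
begin

lemma po_parts: "(\<forall>x\<in>P. leq x x) \<and>
     (\<forall>x\<in>P. \<forall>y\<in>P. leq x y \<and> leq y x \<longrightarrow> x = y) \<and>
     (\<forall>x\<in>P. \<forall>y\<in>P. \<forall>z\<in>P. leq x y \<and> leq y z \<longrightarrow> leq x z)"
  using po unfolding poset_on_def .
lemma refl: "x \<in> P \<Longrightarrow> leq x x" using po_parts by blast
lemma antis: "x \<in> P \<Longrightarrow> y \<in> P \<Longrightarrow> leq x y \<Longrightarrow> leq y x \<Longrightarrow> x = y"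
  using po_parts by blast
lemma trans: "x \<in> P \<Longrightarrow> y \<in> P \<Longrightarrow> z \<in> P \<Longrightarrow> leq x y \<Longrightarrow> leq y z \<Longrightarrow> leq x z"
  using po_parts by blast
lemma ptrans: "x \<in> P \<Longrightarrow> y \<in> P \<Longrightarrow> z \<in> P \<Longrightarrow> pless leq x y \<Longrightarrow> pless leq y z \<Longrightarrow> pless leq x z"
  unfolding pless_def using trans[of x y z] antis[of x y] trans[of y z x] by auto

lemma cover_below:
  "w \<in> P \<Longrightarrow> x \<in> P \<Longrightarrow> pless leq w x \<Longrightarrow> \<exists>z\<in>P. covers P leq z x"
proof (induction "card {v\<in>P. pless leq w v \<and> pless leq v x}" arbitrary: w rule: less_induct)
  case (less w)
  show ?case
  proof (cases "\<exists>v\<in>P. pless leq w v \<and> pless leq v x")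
    case False
    then show ?thesis using less.prems by (auto simp: covers_def)
  next
    case True
    then obtain v where v: "v \<in> P" "pless leq w v" "pless leq v x" by blast
    have sub: "{u\<in>P. pless leq v u \<and> pless leq u x} \<subset> {u\<in>P. pless leq w u \<and> pless leq u x}"
    proof -
      have "{u\<in>P. pless leq v u \<and> pless leq u x} \<subseteq> {u\<in>P. pless leq w u \<and> pless leq u x}"
        using v less.prems ptrans[of w v] by blast
      moreover have "\<not> pless leq v v" by (simp add: pless_def)
      ultimately show ?thesis using v by blast
    qed
    have "card {u\<in>P. pless leq v u \<and> pless leq u x} < card {u\<in>P. pless leq w u \<and> pless leq u x}"
      by (rule psubset_card_mono) (use fin sub in auto)
    then show ?thesis using less.hyps[of v] v less.prems by blast
  qed
qed

lemma cover_above: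
  "w \<in> P \<Longrightarrow> x \<in> P \<Longrightarrow> pless leq x w \<Longrightarrow> \<exists>z\<in>P. covers P leq x z"
proof (induction "card {v\<in>P. pless leq x v \<and> pless leq v w}" arbitrary: w rule: less_induct)
  case (less w)
  show ?case
  proof (cases "\<exists>v\<in>P. pless leq x v \<and> pless leq v w")
    case False
    then show ?thesis using less.prems by (auto simp: covers_def)
  next
    case True
    then obtain v where v: "v \<in> P" "pless leq x v" "pless leq v w" by blast
    have sub: "{u\<in>P. pless leq x u \<and> pless leq u v} \<subset> {u\<in>P. pless leq x u \<and> pless leq u w}"
    proof -
      have "{u\<in>P. pless leq x u \<and> pless leq u v} \<subseteq> {u\<in>P. pless leq x u \<and> pless leq u w}"
        using v less.prems ptrans[of _ v w] by blast
      moreover have "\<not> pless leq v v" by (simp add: pless_def)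
      ultimately show ?thesis using v by blast
    qed
    have "card {u\<in>P. pless leq x u \<and> pless leq u v} < card {u\<in>P. pless leq x u \<and> pless leq u w}"
      by (rule psubset_card_mono) (use fin sub in auto)
    then show ?thesis using less.hyps[of v] v less.prems by blast
  qed
qed

lemma down_chain:
  "x \<in> P \<Longrightarrow> \<exists>c. c \<noteq> [] \<and> set c \<subseteq> P \<and> cc (covers P leq) c \<and>
     (\<forall>z\<in>P. \<not> pless leq z (hd c)) \<and> last c = x"
proof (induction "card {v\<in>P. pless leq v x}" arbitrary: x rule: less_induct)
  case (less x)
  show ?case
  proof (cases "\<exists>v\<in>P. pless leq v x")
    case False
    then show ?thesis using less.prems by (intro exI[of _ "[x]"]) auto
  next
    case True
    then obtain w where "w \<in> P" "pless leq w x" by blast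
    then obtain z where z: "z \<in> P" "covers P leq z x" using cover_below less.prems by blast
    have zx: "pless leq z x" using z by (simp add: covers_def)
    have sub: "{u\<in>P. pless leq u z} \<subset> {u\<in>P. pless leq u x}"
    proof -
      have "{u\<in>P. pless leq u z} \<subseteq> {u\<in>P. pless leq u x}"
        using z zx less.prems ptrans[of _ z x] by blast
      moreover have "\<not> pless leq z z" by (simp add: pless_def)
      ultimately show ?thesis using z zx by blast
    qed
    have "card {u\<in>P. pless leq u z} < card {u\<in>P. pless leq u x}"
      by (rule psubset_card_mono) (use fin sub in auto)
    then obtain c where c: "c \<noteq> []" "set c \<subseteq> P" "cc (covers P leq) c"
      "\<forall>z\<in>P. \<not> pless leq z (hd c)" "last c = z"
      using less.hyps[of z] z by blast
    have "cc (covers P leq) (c @ [x])" using cc_snoc[of c "covers P leq" x] c z by simp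
    moreover have "hd (c @ [x]) = hd c" using c by simp
    ultimately show ?thesis using c less.prems by (intro exI[of _ "c @ [x]"]) simp
  qed
qed

lemma up_chain:
  "x \<in> P \<Longrightarrow> \<exists>c. c \<noteq> [] \<and> set c \<subseteq> P \<and> cc (covers P leq) c \<and>
     (\<forall>z\<in>P. \<not> pless leq (last c) z) \<and> hd c = x"
proof (induction "card {v\<in>P. pless leq x v}" arbitrary: x rule: less_induct)
  case (less x)
  show ?case
  proof (cases "\<exists>v\<in>P. pless leq x v")
    case False
    then show ?thesis using less.prems by (intro exI[of _ "[x]"]) auto
  next
    case True
    then obtain w where "w \<in> P" "pless leq x w" by blast
    then obtain z where z: "z \<in> P" "covers P leq x z" using cover_above less.prems by blast
    have zx: "pless leq x z" using z by (simp add: covers_def)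
    have sub: "{u\<in>P. pless leq z u} \<subset> {u\<in>P. pless leq x u}"
    proof -
      have "{u\<in>P. pless leq z u} \<subseteq> {u\<in>P. pless leq x u}"
        using z zx less.prems ptrans[of x z] by blast
      moreover have "\<not> pless leq z z" by (simp add: pless_def)
      ultimately show ?thesis using z zx by blast
    qed
    have "card {u\<in>P. pless leq z u} < card {u\<in>P. pless leq x u}"
      by (rule psubset_card_mono) (use fin sub in auto)
    then obtain c where c: "c \<noteq> []" "set c \<subseteq> P" "cc (covers P leq) c"
      "\<forall>z\<in>P. \<not> pless leq (last c) z" "hd c = z"
      using less.hyps[of z] z by blast
    have "cc (covers P leq) (x # c)" using c z by (cases c) auto
    moreover have "last (x # c) = last c" using c by simp
    ultimately show ?thesis using c less.prems z by (intro exI[of _ "x # c"]) simp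
  qed
qed


lemma covers_down: "y \<in> P \<Longrightarrow> covers (down_set P leq y) leq a b \<longleftrightarrow> covers P leq a b \<and> leq b y"
proof
  assume y: "y \<in> P" and c: "covers (down_set P leq y) leq a b"
  then have ab: "a \<in> P" "b \<in> P" "leq b y" "pless leq a b" by (auto simp: covers_def down_set_def)
  have "\<not> (\<exists>z\<in>P. pless leq a z \<and> pless leq z b)"
  proof
    assume "\<exists>z\<in>P. pless leq a z \<and> pless leq z b"
    then obtain z where z: "z \<in> P" "pless leq a z" "pless leq z b" by blast
    then have "leq z y" using trans[of z b y] ab y by (simp add: pless_def)
    then have "z \<in> down_set P leq y" using z by (simp add: down_set_def)
    then show False using c z by (auto simp: covers_def)
  qed
  then show "covers P leq a b \<and> leq b y" using ab by (simp add: covers_def)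
next
  assume y: "y \<in> P" and c: "covers P leq a b \<and> leq b y"
  then have "leq a y" using trans[of a b y] by (simp add: covers_def pless_def)
  then show "covers (down_set P leq y) leq a b" using c by (auto simp: covers_def down_set_def)
qed

lemma chain_le: "set c \<subseteq> P \<Longrightarrow> cc (covers P leq) c \<Longrightarrow> c \<noteq> [] \<Longrightarrow> \<forall>x\<in>set c. leq x (last c)"
proof (induction c)
  case (Cons a c)
  show ?case
  proof (cases c)
    case Nil then show ?thesis using Cons refl by simp
  next
    case (Cons b c')
    have ab: "leq a b" using Cons.prems Cons by (simp add: covers_def pless_def)
    have IH: "\<forall>x\<in>set c. leq x (last c)" using Cons.IH Cons.prems Cons by simp
    have "leq b (last c)" using IH Cons by simp
    have "last c \<in> set c" using Cons by simp
    then have "last c \<in> P" "a \<in> P" "b \<in> P" using Cons.prems Cons by auto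
    then have "leq a (last c)" using trans[of a b "last c"] ab \<open>leq b (last c)\<close> by blast
    then show ?thesis using IH Cons by simp
  qed
qed simp

lemma maxdown:
  assumes y: "y \<in> P" and m: "maximal_chain (down_set P leq y) leq c"
  shows "c \<noteq> [] \<and> set c \<subseteq> P \<and> cc (covers P leq) c \<and> (\<forall>z\<in>P. \<not> pless leq z (hd c)) \<and> last c = y"
proof -
  have ne: "c \<noteq> []" and sub: "set c \<subseteq> down_set P leq y"
    and ccd: "cc (covers (down_set P leq y) leq) c"
    and hmin: "\<not> (\<exists>z\<in>down_set P leq y. pless leq z (hd c))"
    and lmax: "\<not> (\<exists>z\<in>down_set P leq y. pless leq (last c) z)"
    using m by (auto simp: maximal_chain_def cc_nth)
  have subP: "set c \<subseteq> P" using sub by (auto simp: down_set_def)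
  have ccP: "cc (covers P leq) c" using cc_mono[OF ccd] covers_down[OF y] by blast
  have hd: "hd c \<in> down_set P leq y" using ne sub by auto
  have "\<forall>z\<in>P. \<not> pless leq z (hd c)"
  proof (intro ballI notI)
    fix z assume z: "z \<in> P" "pless leq z (hd c)"
    then have "leq z y" using hd y trans[of z "hd c" y] by (auto simp: down_set_def pless_def)
    then show False using z hmin by (auto simp: down_set_def)
  qed
  moreover have "last c = y"
  proof (rule ccontr)
    assume "last c \<noteq> y"
    moreover have "last c \<in> down_set P leq y" using ne sub by auto
    ultimately have "pless leq (last c) y" by (simp add: down_set_def pless_def)
    moreover have "y \<in> down_set P leq y" using y refl by (simp add: down_set_def)
    ultimately show False using lmax by blast
  qed
  ultimately show ?thesis using ne subP ccP by blast
qed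

lemma mkdown:
  assumes y: "y \<in> P" and c: "c \<noteq> []" "set c \<subseteq> P" "cc (covers P leq) c"
    "\<forall>z\<in>P. \<not> pless leq z (hd c)" "last c = y"
  shows "maximal_chain (down_set P leq y) leq c"
proof -
  have le: "\<forall>x\<in>set c. leq x y" using chain_le[OF c(2,3,1)] c(5) by simp
  have sub: "set c \<subseteq> down_set P leq y" using le c(2) by (auto simp: down_set_def)
  have "cc (covers (down_set P leq y) leq) c"
    using cc_mono[OF c(3)] covers_down[OF y] le by blast
  moreover have "\<not> (\<exists>z\<in>down_set P leq y. pless leq z (hd c))" using c(4) by (auto simp: down_set_def)
  moreover have "\<not> (\<exists>z\<in>down_set P leq y. pless leq (last c) z)"
    using c(5) y antis by (auto simp: down_set_def pless_def)
  ultimately show ?thesis using c(1) sub by (simp add: maximal_chain_def cc_nth)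
qed

lemma maxP: "maximal_chain P leq c \<longleftrightarrow> c \<noteq> [] \<and> set c \<subseteq> P \<and> cc (covers P leq) c \<and>
   (\<forall>z\<in>P. \<not> pless leq z (hd c)) \<and> (\<forall>z\<in>P. \<not> pless leq (last c) z)"
  by (auto simp: maximal_chain_def cc_nth)

lemma graded_to_consistent:
  assumes pg: "parity_graded P leq" shows "parity_consistent P leq"
  unfolding parity_consistent_def parity_graded_def
proof (intro ballI allI impI)
  fix x c d assume x: "x \<in> P" and cd: "maximal_chain (down_set P leq x) leq c \<and> maximal_chain (down_set P leq x) leq d"
  have c: "c \<noteq> [] \<and> set c \<subseteq> P \<and> cc (covers P leq) c \<and> (\<forall>z\<in>P. \<not> pless leq z (hd c)) \<and> last c = x"
    using maxdown[OF x] cd by blast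
  have d: "d \<noteq> [] \<and> set d \<subseteq> P \<and> cc (covers P leq) d \<and> (\<forall>z\<in>P. \<not> pless leq z (hd d)) \<and> last d = x"
    using maxdown[OF x] cd by blast
  obtain u where u: "u \<noteq> []" "set u \<subseteq> P" "cc (covers P leq) u"
     "\<forall>z\<in>P. \<not> pless leq (last u) z" "hd u = x" using up_chain[OF x] by blast
  have jc: "maximal_chain P leq (butlast c @ u)"
    using join_chain[of c u "covers P leq"] c u unfolding maxP by auto
  have jd: "maximal_chain P leq (butlast d @ u)"
    using join_chain[of d u "covers P leq"] d u unfolding maxP by auto
  have "even (length (butlast c @ u)) = even (length (butlast d @ u))"
    using pg jc jd unfolding parity_graded_def by blast
  then have "even (length c - 1 + length u) = even (length d - 1 + length u)" by simp
  moreover have "length c \<ge> 1" "length d \<ge> 1" using c d by (auto simp: Suc_le_eq)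
  ultimately show "even (length c) = even (length d)" by presburger
qed

end

lemma tele: "cc R c \<Longrightarrow> c \<noteq> [] \<Longrightarrow> (\<And>x y. R x y \<Longrightarrow> eps w x y = r y - r x) \<Longrightarrow>
  wt w c = r (last c) - r (hd c)"
  by (induction w c rule: wt.induct) auto

lemma eps_to_parity: "eps_graded S leq w \<Longrightarrow> parity_graded S leq"
  unfolding eps_graded_def parity_graded_def
proof (intro allI impI)
  fix c d assume e: "\<forall>c d. maximal_chain S leq c \<and> maximal_chain S leq d \<longrightarrow> chain_weight w c = chain_weight w d"
    and cd: "maximal_chain S leq c \<and> maximal_chain S leq d"
  have "wt w c = wt w d" using e cd by (simp add: chain_weight_wt)
  moreover have "odd (wt w c + int (length c))" "odd (wt w d + int (length d))"
    using wt_parity cd by (auto simp: maximal_chain_def)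
  ultimately show "even (length c) = even (length d)" by auto
qed


lemma construction:
  assumes fin: "finite P" and po: "poset_on P leq" and pc: "parity_consistent P leq"
  shows "\<exists>\<omega>. bij_betw \<omega> P {1..card P} \<and> eps_consistent P leq \<omega> \<and>
           (\<forall>y\<in>P. rank P leq \<omega> y \<in> {0, 1}) \<and>
           (\<forall>c. maximal_chain P leq c \<longrightarrow> chain_weight \<omega> c \<in> {0, 1})"
proof -
  define r where "r x = (if odd (length (SOME c. maximal_chain (down_set P leq x) leq c)) then 0 else 1 :: int)" for x
  have ex: "\<exists>c. maximal_chain (down_set P leq x) leq c" if x: "x \<in> P" for x
    using down_chain[OF fin po x] mkdown[OF fin po x] by blast
  have rchain: "r x = (if odd (length c) then 0 else 1)"
    if x: "x \<in> P" and c: "maximal_chain (down_set P leq x) leq c" for x c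
  proof -
    let ?d = "SOME c. maximal_chain (down_set P leq x) leq c"
    have d: "maximal_chain (down_set P leq x) leq ?d" using someI_ex[OF ex[OF x]] .
    have "even (length ?d) = even (length c)"
      using pc x d c unfolding parity_consistent_def parity_graded_def by blast
    then show ?thesis unfolding r_def by simp
  qed
  have rmin: "r x = 0" if x: "x \<in> P" and m: "\<forall>z\<in>P. \<not> pless leq z x" for x
    using rchain[OF x mkdown[OF fin po x, of "[x]"]] x m by simp
  have rcov: "r y = 1 - r x" if cv: "covers P leq x y" for x y
  proof -
    have x: "x \<in> P" and y: "y \<in> P" using cv by (auto simp: covers_def)
    obtain c where c: "c \<noteq> []" "set c \<subseteq> P" "cc (covers P leq) c"
      "\<forall>z\<in>P. \<not> pless leq z (hd c)" "last c = x" using down_chain[OF fin po x] by blast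
    have c2: "cc (covers P leq) (c @ [y])" using cc_snoc[of c "covers P leq" y] c cv by simp
    have mc: "maximal_chain (down_set P leq x) leq c" using mkdown[OF fin po x] c by blast
    have mc2: "maximal_chain (down_set P leq y) leq (c @ [y])"
      using mkdown[OF fin po y, of "c @ [y]"] c c2 y by simp
    show ?thesis using rchain[OF x mc] rchain[OF y mc2] by simp
  qed
  define E where "E = {x\<in>P. r x = 0}"
  define Od where "Od = {x\<in>P. r x \<noteq> 0}"
  have fE: "finite E" "finite Od" using fin by (auto simp: E_def Od_def)
  have PEO: "P = E \<union> Od" and dEO: "E \<inter> Od = {}" by (auto simp: E_def Od_def)
  have cardP: "card P = card E + card Od" using PEO dEO fE card_Un_disjoint by metis
  obtain f where f: "bij_betw f E {1..card E}"
    using finite_same_card_bij[OF fE(1), of "{1..card E}"] by auto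
  obtain g where g: "bij_betw g Od {card E + 1..card E + card Od}"
    using finite_same_card_bij[OF fE(2), of "{card E + 1..card E + card Od}"] by auto
  define w where "w x = (if r x = 0 then f x else g x)" for x
  have wE: "bij_betw w E {1..card E}" using f by (rule bij_betw_cong[THEN iffD1, rotated]) (auto simp: w_def E_def)
  have wOd: "bij_betw w Od {card E + 1..card E + card Od}" using g
    by (rule bij_betw_cong[THEN iffD1, rotated]) (auto simp: w_def Od_def)
  have "bij_betw w (E \<union> Od) ({1..card E} \<union> {card E + 1..card E + card Od})"
    by (rule bij_betw_combine[OF wE wOd]) auto
  moreover have "{1..card E} \<union> {card E + 1..card E + card Od} = {1..card P}" using cardP by auto
  ultimately have bij: "bij_betw w P {1..card P}" using PEO by simp
  have r01: "r x = 0 \<or> r x = 1" for x by (simp add: r_def)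
  have epsc: "eps w x y = r y - r x" if cv: "covers P leq x y" for x y
  proof -
    have x: "x \<in> P" and y: "y \<in> P" using cv by (auto simp: covers_def)
    show ?thesis
    proof (cases "r x = 0")
      case True
      then have "r y = 1" using rcov[OF cv] by simp
      then have "x \<in> E" "y \<in> Od" using True x y by (auto simp: E_def Od_def)
      then have "w x \<le> card E" "w y \<ge> card E + 1"
        using bij_betwE[OF wE] bij_betwE[OF wOd] by auto
      then show ?thesis using True \<open>r y = 1\<close> by (simp add: eps_def)
    next
      case False
      then have rx: "r x = 1" using r01 by blast
      then have "r y = 0" using rcov[OF cv] by simp
      then have "y \<in> E" "x \<in> Od" using rx x y by (auto simp: E_def Od_def)
      then have "w y \<le> card E" "w x \<ge> card E + 1"
        using bij_betwE[OF wE] bij_betwE[OF wOd] by auto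
      then show ?thesis using rx \<open>r y = 0\<close> by (simp add: eps_def)
    qed
  qed
  have wtc: "wt w c = r (last c) - r (hd c)" if "cc (covers P leq) c" "c \<noteq> []" for c
    using tele[of "covers P leq" c w r, OF that epsc] .
  have down_w: "chain_weight w c = r y" if y: "y \<in> P" and c: "maximal_chain (down_set P leq y) leq c" for y c
  proof -
    have m: "c \<noteq> [] \<and> set c \<subseteq> P \<and> cc (covers P leq) c \<and> (\<forall>z\<in>P. \<not> pless leq z (hd c)) \<and> last c = y"
      using maxdown[OF fin po y c] .
    then have "hd c \<in> P" by (cases c) auto
    then have "r (hd c) = 0" using rmin m by blast
    moreover have "wt w c = r (last c) - r (hd c)" using wtc m by blast
    ultimately show ?thesis using m chain_weight_wt[of w c] by simp
  qed
  have "eps_consistent P leq w"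
    unfolding eps_consistent_def eps_graded_def
  proof (intro ballI allI impI)
    fix y c d assume "y \<in> P" "maximal_chain (down_set P leq y) leq c \<and> maximal_chain (down_set P leq y) leq d"
    then show "chain_weight w c = chain_weight w d" using down_w by metis
  qed
  moreover have "\<forall>y\<in>P. rank P leq w y \<in> {0, 1}"
  proof
    fix y assume y: "y \<in> P"
    have "rank P leq w y = r y" unfolding rank_def
      using down_w[OF y someI_ex[OF ex[OF y]]] .
    then show "rank P leq w y \<in> {0, 1}" using r01 by auto
  qed
  moreover have "\<forall>c. maximal_chain P leq c \<longrightarrow> chain_weight w c \<in> {0, 1}"
  proof (intro allI impI)
    fix c assume "maximal_chain P leq c"
    then have m: "c \<noteq> [] \<and> set c \<subseteq> P \<and> cc (covers P leq) c \<and>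
       (\<forall>z\<in>P. \<not> pless leq z (hd c)) \<and> (\<forall>z\<in>P. \<not> pless leq (last c) z)"
      by (rule maxP[OF fin po, THEN iffD1])
    then have "hd c \<in> P" by (cases c) auto
    then have "r (hd c) = 0" using rmin m by blast
    moreover have "wt w c = r (last c) - r (hd c)" using wtc m by blast
    ultimately have "chain_weight w c = r (last c)" using chain_weight_wt[of w c] by simp
    then show "chain_weight w c \<in> {0, 1}" using r01 by auto
  qed
  ultimately show ?thesis using bij by blast
qed


lemma graded_omega:
  assumes fin: "finite P" and po: "poset_on P leq" and pg: "parity_graded P leq"
  shows "\<exists>\<omega>. bij_betw \<omega> P {1..card P} \<and> eps_graded P leq \<omega> \<and>
           (\<forall>c. maximal_chain P leq c \<longrightarrow> chain_weight \<omega> c \<in> {0, 1})"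
proof -
  obtain w where w: "bij_betw w P {1..card P}"
    "\<forall>c. maximal_chain P leq c \<longrightarrow> chain_weight w c \<in> {0, 1}"
    using construction[OF fin po graded_to_consistent[OF fin po pg]] by blast
  have "eps_graded P leq w"
    unfolding eps_graded_def
  proof (intro allI impI)
    fix c d assume cd: "maximal_chain P leq c \<and> maximal_chain P leq d"
    have "even (length c) = even (length d)" using pg cd unfolding parity_graded_def by blast
    moreover have "odd (wt w c + int (length c))" "odd (wt w d + int (length d))"
      using wt_parity cd by (auto simp: maximal_chain_def)
    moreover have "wt w c \<in> {0, 1}" "wt w d \<in> {0, 1}" using w(2) cd chain_weight_wt by metis+
    ultimately have "wt w c = wt w d" by auto
    then show "chain_weight w c = chain_weight w d" by (simp add: chain_weight_wt)
  qed
  then show ?thesis using w by blast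
qed

theorem theorem2p5:
  fixes P :: "'a set" and leq :: "'a \<Rightarrow> 'a \<Rightarrow> bool"
  assumes "finite P" and "P \<noteq> {}" and "poset_on P leq"
  shows "((\<exists>\<omega>. bij_betw \<omega> P {1..card P} \<and> eps_consistent P leq \<omega>)
            \<longleftrightarrow> parity_consistent P leq)
       \<and> ((\<exists>\<omega>. bij_betw \<omega> P {1..card P} \<and> eps_graded P leq \<omega>)
            \<longleftrightarrow> parity_graded P leq)
       \<and> (parity_consistent P leq \<longrightarrow>
            (\<exists>\<omega>. bij_betw \<omega> P {1..card P} \<and> eps_consistent P leq \<omega> \<and>
                 (\<forall>y\<in>P. rank P leq \<omega> y \<in> {0, 1})))
       \<and> (parity_graded P leq \<longrightarrow>
            (\<exists>\<omega>. bij_betw \<omega> P {1..card P} \<and> eps_graded P leq \<omega> \<and>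
                 (\<forall>c. maximal_chain P leq c \<longrightarrow> chain_weight \<omega> c \<in> {0, 1})))"
proof -
  note fin = assms(1) and po = assms(3)
  have A1: "(\<exists>\<omega>. bij_betw \<omega> P {1..card P} \<and> eps_consistent P leq \<omega>) \<longleftrightarrow> parity_consistent P leq"
  proof
    assume "\<exists>\<omega>. bij_betw \<omega> P {1..card P} \<and> eps_consistent P leq \<omega>"
    then obtain w where "eps_consistent P leq w" by blast
    then show "parity_consistent P leq"
      unfolding eps_consistent_def parity_consistent_def using eps_to_parity by blast
  next
    assume "parity_consistent P leq"
    then show "\<exists>\<omega>. bij_betw \<omega> P {1..card P} \<and> eps_consistent P leq \<omega>"
      using construction[OF fin po] by blast
  qed
  have A2: "(\<exists>\<omega>. bij_betw \<omega> P {1..card P} \<and> eps_graded P leq \<omega>) \<longleftrightarrow> parity_graded P leq"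
  proof
    assume "\<exists>\<omega>. bij_betw \<omega> P {1..card P} \<and> eps_graded P leq \<omega>"
    then obtain w where "eps_graded P leq w" by blast
    then show "parity_graded P leq" using eps_to_parity by blast
  next
    assume "parity_graded P leq"
    then show "\<exists>\<omega>. bij_betw \<omega> P {1..card P} \<and> eps_graded P leq \<omega>"
      using graded_omega[OF fin po] by blast
  qed
  have A3: "parity_consistent P leq \<longrightarrow>
            (\<exists>\<omega>. bij_betw \<omega> P {1..card P} \<and> eps_consistent P leq \<omega> \<and>
                 (\<forall>y\<in>P. rank P leq \<omega> y \<in> {0, 1}))"
    using construction[OF fin po] by blast
  have A4: "parity_graded P leq \<longrightarrow>
            (\<exists>\<omega>. bij_betw \<omega> P {1..card P} \<and> eps_graded P leq \<omega> \<and>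
                 (\<forall>c. maximal_chain P leq c \<longrightarrow> chain_weight \<omega> c \<in> {0, 1}))"
    using graded_omega[OF fin po] by blast
  show ?thesis using A1 A2 A3 A4 by blast
qed

end
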